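(* Let $G^c$ be a connected vertex-coloured graph with $n$ vertices, $c$ colours and minimum degree $\delta$. Then either $\gamma^t(G^c)=c$ or $$\gamma^t(G^c)<\frac{1+\ln(\delta+1)}{\delta+1}(n-c+1)+c-1.$$
   Context: A vertex-coloured graph $G^c$ with colour set $\{1,\dots,c\}$ is a finite simple graph in which every vertex receives exactly one colour and every colour appears on at least one vertex. A dominating set is tropical if every colour appears on at least one of its vertices; $\gamma^t(G^c)$ is the minimum size of a tropical dominating set. *)

theory Defs
  imports "HOL-Analysis.Analysis"
begin

definition simple_graph :: "'a set \<Rightarrow> ('a \<Rightarrow> 'a \<Rightarrow> bool) \<Rightarrow> bool" where
  "simple_graph V E \<longleftrightarrow> finite V \<and> (\<forall>u v. E u v \<longrightarrow> u \<in> V \<and> v \<in> V)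
     \<and> (\<forall>u v. E u v \<longrightarrow> E v u) \<and> (\<forall>v. \<not> E v v)"

definition connected_graph :: "'a set \<Rightarrow> ('a \<Rightarrow> 'a \<Rightarrow> bool) \<Rightarrow> bool" where
  "connected_graph V E \<longleftrightarrow> V \<noteq> {} \<and>
     (\<forall>u\<in>V. \<forall>v\<in>V. (u, v) \<in> {(x, y). E x y}\<^sup>*)"

definition neighbours :: "'a set \<Rightarrow> ('a \<Rightarrow> 'a \<Rightarrow> bool) \<Rightarrow> 'a \<Rightarrow> 'a set" where
  "neighbours V E v = {u \<in> V. E v u}"

definition degree :: "'a set \<Rightarrow> ('a \<Rightarrow> 'a \<Rightarrow> bool) \<Rightarrow> 'a \<Rightarrow> nat" where
  "degree V E v = card (neighbours V E v)"

definition min_degree :: "'a set \<Rightarrow> ('a \<Rightarrow> 'a \<Rightarrow> bool) \<Rightarrow> nat" where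
  "min_degree V E = Min (degree V E ` V)"

definition vertex_colouring :: "'a set \<Rightarrow> ('a \<Rightarrow> nat) \<Rightarrow> nat \<Rightarrow> bool" where
  "vertex_colouring V col c \<longleftrightarrow> col ` V = {1..c}"

definition dominating_set :: "'a set \<Rightarrow> ('a \<Rightarrow> 'a \<Rightarrow> bool) \<Rightarrow> 'a set \<Rightarrow> bool" where
  "dominating_set V E D \<longleftrightarrow> D \<subseteq> V \<and> (\<forall>v\<in>V. v \<in> D \<or> (\<exists>u\<in>D. E v u))"

definition tropical_dominating_set ::
  "'a set \<Rightarrow> ('a \<Rightarrow> 'a \<Rightarrow> bool) \<Rightarrow> ('a \<Rightarrow> nat) \<Rightarrow> nat \<Rightarrow> 'a set \<Rightarrow> bool" where
  "tropical_dominating_set V E col c D \<longleftrightarrow> dominating_set V E D \<and> {1..c} \<subseteq> col ` D"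

definition tropical_domination_number ::
  "'a set \<Rightarrow> ('a \<Rightarrow> 'a \<Rightarrow> bool) \<Rightarrow> ('a \<Rightarrow> nat) \<Rightarrow> nat \<Rightarrow> nat" where
  "tropical_domination_number V E col c = Min (card ` {D. tropical_dominating_set V E col c D})"

end

theory Submission imports Defs begin

lemma pow_binom:
  fixes p q :: real
  assumes "finite S"
  shows "(\<Sum>X\<in>Pow S. p ^ card X * q ^ (card S - card X)) = (p + q) ^ card S"
  using assms
proof (induction S rule: finite_induct)
  case empty
  then show ?case by simp
next
  case (insert x S)
  have fin: "finite (Pow S)" using insert by simp
  have disj: "Pow S \<inter> insert x ` Pow S = {}" using insert by auto
  have inj: "inj_on (insert x) (Pow S)" using insert unfolding inj_on_def by auto
  have s1: "(\<Sum>X\<in>Pow S. p ^ card X * q ^ (card (insert x S) - card X))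
       = q * (\<Sum>X\<in>Pow S. p ^ card X * q ^ (card S - card X))"
    unfolding sum_distrib_left
  proof (rule sum.cong[OF refl])
    fix X assume X: "X \<in> Pow S"
    then have "card X \<le> card S" using insert by (simp add: card_mono)
    then have "card (insert x S) - card X = Suc (card S - card X)" using insert by simp
    then show "p ^ card X * q ^ (card (insert x S) - card X) = q * (p ^ card X * q ^ (card S - card X))"
      by simp
  qed
  have s2: "(\<Sum>X\<in>insert x ` Pow S. p ^ card X * q ^ (card (insert x S) - card X))
       = p * (\<Sum>X\<in>Pow S. p ^ card X * q ^ (card S - card X))"
    unfolding sum.reindex[OF inj] sum_distrib_left
  proof (rule sum.cong[OF refl])
    fix X assume X: "X \<in> Pow S"
    then have "x \<notin> X" "finite X" using insert by (auto intro: finite_subset)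
    then have "card (insert x X) = Suc (card X)" by simp
    moreover have "card (insert x S) = Suc (card S)" using insert by simp
    ultimately show "((\<lambda>X. p ^ card X * q ^ (card (insert x S) - card X)) \<circ> insert x) X = p * (p ^ card X * q ^ (card S - card X))"
      by simp
  qed
  have "(\<Sum>X\<in>Pow (insert x S). p ^ card X * q ^ (card (insert x S) - card X))
     = (\<Sum>X\<in>Pow S. p ^ card X * q ^ (card (insert x S) - card X))
       + (\<Sum>X\<in>insert x ` Pow S. p ^ card X * q ^ (card (insert x S) - card X))"
    unfolding Pow_insert by (rule sum.union_disjoint) (use fin disj in auto)
  also have "\<dots> = (p + q) * (p + q) ^ card S" using s1 s2 insert by (simp add: algebra_simps)
  finally show ?case using insert by simp
qed

lemma avoid_sum:
  fixes p :: real
  assumes "finite A" "B \<subseteq> A"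
  shows "(\<Sum>X\<in>Pow A. if X \<inter> B = {} then p ^ card X * (1 - p) ^ (card A - card X) else 0) = (1 - p) ^ card B"
proof -
  have finB: "finite B" using assms finite_subset by blast
  have "(\<Sum>X\<in>Pow A. if X \<inter> B = {} then p ^ card X * (1 - p) ^ (card A - card X) else 0)
      = (\<Sum>X\<in>{X\<in>Pow A. X \<inter> B = {}}. p ^ card X * (1 - p) ^ (card A - card X))"
    by (rule sum.inter_filter[symmetric]) (simp add: assms)
  also have "{X\<in>Pow A. X \<inter> B = {}} = Pow (A - B)" by auto
  also have "(\<Sum>X\<in>Pow (A - B). p ^ card X * (1 - p) ^ (card A - card X))
      = (\<Sum>X\<in>Pow (A - B). (1-p) ^ card B * (p ^ card X * (1 - p) ^ (card (A - B) - card X)))"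
  proof (rule sum.cong[OF refl])
    fix X assume "X \<in> Pow (A - B)"
    then have "card X \<le> card (A - B)" using assms by (simp add: card_mono)
    moreover have "card (A - B) + card B = card A" using assms finB
      by (metis card_Diff_subset le_add_diff_inverse2 card_mono)
    ultimately have "card A - card X = card B + (card (A - B) - card X)" by linarith
    then show "p ^ card X * (1 - p) ^ (card A - card X) = (1-p) ^ card B * (p ^ card X * (1 - p) ^ (card (A - B) - card X))"
      by (simp add: power_add)
  qed
  also have "\<dots> = (1-p) ^ card B * (p + (1 - p)) ^ card (A - B)"
    by (simp add: sum_distrib_left[symmetric] pow_binom assms)
  finally show ?thesis by simp
qed

lemma card_filter_sum:
  "finite U \<Longrightarrow> real (card {u\<in>U. P u}) = (\<Sum>u\<in>U. if P u then 1 else 0)"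
  by (simp add: sum.If_cases Int_def)

lemma averaging:
  fixes A U :: "'a set" and N :: "'a \<Rightarrow> 'a set" and p :: real and k :: nat
  assumes fA: "finite A" and UA: "U \<subseteq> A" and NU: "\<forall>u\<in>U. N u \<subseteq> A \<and> k \<le> card (N u)"
    and p0: "0 \<le> p" and p1: "p \<le> 1"
  shows "\<exists>X\<subseteq>A. real (card X + card {u\<in>U. N u \<inter> X = {}}) \<le> p * card A + card U * (1-p)^k"
proof -
  define w where "w (X::'a set) = p ^ card X * (1 - p) ^ (card A - card X)" for X
  define F where "F (X::'a set) = card X + card {u\<in>U. N u \<inter> X = {}}" for X
  have fU: "finite U" using fA UA finite_subset by blast
  have w0: "w X \<ge> 0" for X using p0 p1 unfolding w_def by simp
  have sw: "(\<Sum>X\<in>Pow A. w X) = 1" unfolding w_def using pow_binom[OF fA, of p "1-p"] by simp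
  have avoid: "B \<subseteq> A \<Longrightarrow> (\<Sum>X\<in>Pow A. if X \<inter> B = {} then w X else 0) = (1 - p) ^ card B" for B
    unfolding w_def using avoid_sum[OF fA] by simp
  have S1: "(\<Sum>X\<in>Pow A. w X * real (card X)) = p * card A"
  proof -
    have "(\<Sum>X\<in>Pow A. w X * real (card X)) = (\<Sum>X\<in>Pow A. \<Sum>a\<in>A. if X \<inter> {a} = {} then 0 else w X)"
    proof (rule sum.cong[OF refl])
      fix X assume X: "X \<in> Pow A"
      have "real (card X) = real (card {a\<in>A. \<not> X \<inter> {a} = {}})"
      proof -
        have "{a\<in>A. \<not> X \<inter> {a} = {}} = X" using X by auto
        then show ?thesis by simp
      qed
      also have "\<dots> = (\<Sum>a\<in>A. if \<not> X \<inter> {a} = {} then 1 else 0)" by (rule card_filter_sum[OF fA])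
      finally show "w X * real (card X) = (\<Sum>a\<in>A. if X \<inter> {a} = {} then 0 else w X)"
        by (simp add: sum_distrib_left if_distrib cong: if_cong) (auto intro!: sum.cong)
    qed
    also have "\<dots> = (\<Sum>a\<in>A. \<Sum>X\<in>Pow A. if X \<inter> {a} = {} then 0 else w X)" by (rule sum.swap)
    also have "\<dots> = (\<Sum>a\<in>A. (\<Sum>X\<in>Pow A. w X) - (\<Sum>X\<in>Pow A. if X \<inter> {a} = {} then w X else 0))"
      by (rule sum.cong[OF refl]) (simp add: sum_subtractf[symmetric] fA, rule sum.cong, auto)
    also have "\<dots> = (\<Sum>a\<in>A. p)"
    proof (rule sum.cong[OF refl])
      fix a assume "a \<in> A"
      then have "(\<Sum>X\<in>Pow A. if X \<inter> {a} = {} then w X else 0) = 1 - p" using avoid[of "{a}"] by simp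
      then show "(\<Sum>X\<in>Pow A. w X) - (\<Sum>X\<in>Pow A. if X \<inter> {a} = {} then w X else 0) = p"
        using sw by simp
    qed
    finally show ?thesis by simp
  qed
  have S2: "(\<Sum>X\<in>Pow A. w X * real (card {u\<in>U. N u \<inter> X = {}})) \<le> card U * (1-p)^k"
  proof -
    have "(\<Sum>X\<in>Pow A. w X * real (card {u\<in>U. N u \<inter> X = {}})) = (\<Sum>X\<in>Pow A. \<Sum>u\<in>U. if X \<inter> N u = {} then w X else 0)"
      by (rule sum.cong[OF refl]) (simp add: card_filter_sum[OF fU] sum_distrib_left if_distrib Int_commute cong: if_cong)
    also have "\<dots> = (\<Sum>u\<in>U. \<Sum>X\<in>Pow A. if X \<inter> N u = {} then w X else 0)" by (rule sum.swap)
    also have "\<dots> = (\<Sum>u\<in>U. (1-p) ^ card (N u))" using avoid NU by simp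
    also have "\<dots> \<le> (\<Sum>u\<in>U. (1-p) ^ k)"
      by (rule sum_mono) (use NU p0 p1 in \<open>simp add: power_decreasing\<close>)
    finally show ?thesis by simp
  qed
  have fP: "finite (Pow A)" using fA by simp
  define m where "m = Min (F ` Pow A)"
  have "m \<in> F ` Pow A" unfolding m_def using fP by (intro Min_in) auto
  then obtain X0 where X0': "X0 \<in> Pow A" "F X0 = m" by blast
  have X0: "X0 \<in> Pow A" "\<forall>X\<in>Pow A. F X0 \<le> F X"
    using X0' fP unfolding m_def by auto
  have "real (F X0) = (\<Sum>X\<in>Pow A. w X * real (F X0))" using sw by (simp add: sum_distrib_right[symmetric])
  also have "\<dots> \<le> (\<Sum>X\<in>Pow A. w X * real (F X))"
    by (rule sum_mono) (use X0 w0 in \<open>simp add: mult_left_mono\<close>)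
  also have "\<dots> = (\<Sum>X\<in>Pow A. w X * real (card X)) + (\<Sum>X\<in>Pow A. w X * real (card {u\<in>U. N u \<inter> X = {}}))"
    unfolding F_def by (simp add: distrib_left sum.distrib)
  also have "\<dots> \<le> p * card A + card U * (1-p)^k" using S1 S2 by simp
  finally show ?thesis using X0 unfolding F_def by blast
qed

lemma aux_eq:
  fixes k a L c :: real
  assumes k: "k > 0"
  shows "(1 + L)/k * (a + 1) + c - 1 - (c + L/k*a + (a - (k - 1))/k) = L/k"
  using k by (simp add: field_simps)

lemma real_bound:
  fixes d a L :: real
  assumes d1: "d \<ge> 1" and L: "L = ln (d + 1)"
  shows "c + L/(d+1)*a + (a - d)/(d+1) < (1 + L)/(d+1) * (a + 1) + c - 1"
proof -
  have Lp: "L > 0" using L d1 by (simp add: ln_gt_zero)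
  have "(1 + L)/(d+1) * (a + 1) + c - 1 - (c + L/(d+1)*a + (a - d)/(d+1)) = L/(d+1)"
    using aux_eq[of "d+1" L a c] d1 by simp
  moreover have "L/(d+1) > 0" using Lp d1 by simp
  ultimately show ?thesis by linarith
qed

lemma pow_bound:
  fixes d :: nat
  assumes "d \<ge> 1"
  shows "(1 - ln (real d + 1)/(real d + 1)) ^ (d+1) \<le> 1 / (real d + 1)"
proof -
  define p where "p = ln (real d + 1)/(real d + 1)"
  have "ln (real d + 1) \<le> real d" using ln_le_minus_one[of "real d + 1"] by simp
  then have p1: "p \<le> 1" unfolding p_def by simp
  have "1 - p \<le> exp (-p)" using exp_ge_add_one_self[of "-p"] by simp
  then have "(1 - p) ^ (d+1) \<le> exp (-p) ^ (d+1)" using p1 by (intro power_mono) auto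
  also have "\<dots> = exp (real (d+1) * (-p))" by (rule exp_of_nat_mult[symmetric])
  also have "real (d+1) * (-p) = - ln (real d + 1)" unfolding p_def by (simp add: add.commute)
  also have "exp (- ln (real d + 1)) = 1 / (real d + 1)" by (simp add: exp_minus')
  finally show ?thesis unfolding p_def .
qed

lemma tds_card_ge:
  assumes "finite V" "tropical_dominating_set V E col c D"
  shows "c \<le> card D"
proof -
  have D: "D \<subseteq> V" "{1..c} \<subseteq> col ` D" using assms unfolding tropical_dominating_set_def dominating_set_def by auto
  have "finite D" using D assms finite_subset by blast
  have "c = card {1..c}" by simp
  also have "\<dots> \<le> card (col ` D)" using D \<open>finite D\<close> by (intro card_mono) auto
  also have "\<dots> \<le> card D" using \<open>finite D\<close> by (rule card_image_le)
  finally show ?thesis .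
qed

theorem mainTheorem5:
  fixes V :: "'a set" and E :: "'a \<Rightarrow> 'a \<Rightarrow> bool" and col :: "'a \<Rightarrow> nat" and c :: nat
  assumes "simple_graph V E" and "connected_graph V E" and "vertex_colouring V col c"
  shows "tropical_domination_number V E col c = c \<or>
    real (tropical_domination_number V E col c)
      < (1 + ln (real (min_degree V E) + 1)) / (real (min_degree V E) + 1)
          * (real (card V) - real c + 1) + real c - 1"
proof -
  have fin: "finite V" and Ein: "\<And>u v. E u v \<Longrightarrow> u \<in> V \<and> v \<in> V"
    and sym: "\<And>u v. E u v \<Longrightarrow> E v u" and irr: "\<And>v. \<not> E v v"
    using assms(1) unfolding simple_graph_def by blast+
  have Vne: "V \<noteq> {}" and conn: "\<And>u v. u \<in> V \<Longrightarrow> v \<in> V \<Longrightarrow> (u, v) \<in> {(x, y). E x y}\<^sup>*"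
    using assms(2) unfolding connected_graph_def by blast+
  have colV: "col ` V = {1..c}" using assms(3) unfolding vertex_colouring_def .
  define t where "t = tropical_domination_number V E col c"
  define TD where "TD = {D. tropical_dominating_set V E col c D}"
  have "TD \<subseteq> Pow V" unfolding TD_def tropical_dominating_set_def dominating_set_def by blast
  then have finTD: "finite TD" using fin by (simp add: finite_subset)
  have t_le: "t \<le> card D" if "tropical_dominating_set V E col c D" for D
    unfolding t_def tropical_domination_number_def using that finTD TD_def by (intro Min_le) auto
  have VTD: "V \<in> TD" unfolding TD_def tropical_dominating_set_def dominating_set_def using colV by auto
  have "t \<in> card ` TD" unfolding t_def tropical_domination_number_def TD_def[symmetric]
    using finTD VTD by (intro Min_in) auto
  then have t_ge: "c \<le> t" using tds_card_ge[OF fin] unfolding TD_def by auto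
  obtain R where RV: "R \<subseteq> V" and Rinj: "inj_on col R" and colR: "col ` R = {1..c}"
    using subset_image_inj[of "{1..c}" col V] colV by auto
  have finR: "finite R" using RV fin finite_subset by blast
  have cardR: "card R = c" using card_image[OF Rinj] colR by simp
  show ?thesis
  proof (cases "dominating_set V E R")
    case True
    then have "tropical_dominating_set V E col c R" unfolding tropical_dominating_set_def using colR by simp
    then have "t \<le> c" using t_le cardR by fastforce
    then show ?thesis using t_ge unfolding t_def by simp
  next
    case False
    then obtain u where uV: "u \<in> V" and uR: "u \<notin> R" and unadj: "\<forall>r\<in>R. \<not> E u r"
      unfolding dominating_set_def using RV by auto
    have "col u \<in> col ` R" using uV colV colR by auto
    then obtain r0 where r0: "r0 \<in> R" "col r0 = col u" by auto
    define R2 where "R2 = insert u (R - {r0})"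
    have R2V: "R2 \<subseteq> V" unfolding R2_def using RV uV by auto
    have "R = insert r0 (R - {r0})" using r0 by auto
    then have "col ` R = insert (col r0) (col ` (R - {r0}))" by (metis image_insert)
    then have "col ` R2 = col ` R" unfolding R2_def using r0 by simp
    then have colR2: "col ` R2 = {1..c}" using colR by simp
    have finR2: "finite R2" unfolding R2_def using finR by simp
    have cardR2: "card R2 = c" unfolding R2_def using finR r0 uR cardR
      by (simp add: card_Diff_singleton) (metis card_gt_0_iff Suc_pred empty_iff)
    define Nu where "Nu = neighbours V E u"
    have NuR2: "Nu \<inter> R2 = {}" unfolding Nu_def neighbours_def R2_def using irr unadj by auto
    have ur0: "u \<noteq> r0" using uR r0 by auto
    have deg1: "degree V E v \<ge> 1" if vV: "v \<in> V" for v
    proof -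
      obtain w where wV: "w \<in> V" and wv: "w \<noteq> v" using ur0 uV RV r0 by (cases "v = u") auto
      have "(v, w) \<in> {(x, y). E x y}\<^sup>*" using conn vV wV by blast
      then obtain y where "E v y"
        using wv by (cases rule: converse_rtranclE) auto
      then have "y \<in> neighbours V E v" unfolding neighbours_def using Ein by auto
      moreover have "finite (neighbours V E v)" unfolding neighbours_def using fin by simp
      ultimately show ?thesis unfolding degree_def by (metis One_nat_def Suc_leI card_gt_0_iff empty_iff)
    qed
    define \<delta> where "\<delta> = min_degree V E"
    have d1: "\<delta> \<ge> 1" unfolding \<delta>_def min_degree_def using fin Vne deg1 by (subst Min_ge_iff) auto
    have dle: "\<delta> \<le> degree V E v" if "v \<in> V" for v
      unfolding \<delta>_def min_degree_def using fin that by (intro Min_le) auto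
    define A where "A = V - R2"
    define U where "U = {v\<in>V. v \<notin> R2 \<and> \<not> (\<exists>r\<in>R2. E v r)}"
    define CN where "CN v = insert v (neighbours V E v)" for v
    have finA: "finite A" unfolding A_def using fin by simp
    have UA: "U \<subseteq> A" unfolding U_def A_def by auto
    have CNU: "\<forall>v\<in>U. CN v \<subseteq> A \<and> \<delta> + 1 \<le> card (CN v)"
    proof
      fix v assume vU: "v \<in> U"
      have "CN v \<subseteq> A" using vU unfolding CN_def A_def U_def neighbours_def by auto
      moreover have "card (CN v) = degree V E v + 1"
        unfolding CN_def degree_def using fin irr by (simp add: neighbours_def)
      moreover have "\<delta> \<le> degree V E v" using vU dle unfolding U_def by auto
      ultimately show "CN v \<subseteq> A \<and> \<delta> + 1 \<le> card (CN v)" by simp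
    qed
    define p where "p = ln (real \<delta> + 1) / (real \<delta> + 1)"
    have p0: "0 \<le> p" unfolding p_def by simp
    have "ln (real \<delta> + 1) \<le> real \<delta>" using ln_le_minus_one[of "real \<delta> + 1"] by simp
    then have p1: "p \<le> 1" unfolding p_def by simp
    obtain X where XA: "X \<subseteq> A" and Xb: "real (card X + card {v\<in>U. CN v \<inter> X = {}}) \<le> p * card A + card U * (1-p)^(\<delta>+1)"
      using averaging[OF finA UA CNU p0 p1] by blast
    define Y where "Y = {v\<in>U. CN v \<inter> X = {}}"
    define D where "D = R2 \<union> X \<union> Y"
    have "tropical_dominating_set V E col c D"
      unfolding tropical_dominating_set_def dominating_set_def
    proof (intro conjI ballI)
      show "D \<subseteq> V" unfolding D_def Y_def using R2V XA UA unfolding A_def by auto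
      show "{1..c} \<subseteq> col ` D" unfolding D_def using colR2 by auto
      fix v assume vV: "v \<in> V"
      show "v \<in> D \<or> (\<exists>w\<in>D. E v w)"
      proof (cases "v \<in> U")
        case False
        then show ?thesis unfolding U_def D_def using vV by auto
      next
        case True
        show ?thesis
        proof (cases "CN v \<inter> X = {}")
          case True
          then show ?thesis using \<open>v \<in> U\<close> unfolding D_def Y_def by auto
        next
          case False
          then show ?thesis unfolding D_def CN_def neighbours_def by auto
        qed
      qed
    qed
    then have tD: "t \<le> card D" by (rule t_le)
    have finX: "finite X" using XA finA finite_subset by blast
    have finU: "finite U" using UA finA finite_subset by blast
    then have finY: "finite Y" unfolding Y_def by simp
    have cD: "card D \<le> c + card X + card Y" unfolding D_def
      using card_Un_le[of "R2 \<union> X" Y] card_Un_le[of R2 X] cardR2 by linarith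
    have NuA: "Nu \<subseteq> A" unfolding A_def using NuR2 unfolding Nu_def neighbours_def by auto
    have UNu: "U \<subseteq> A - Nu" using UA unfolding U_def Nu_def neighbours_def R2_def using sym by auto
    have finNu: "finite Nu" using NuA finA finite_subset by blast
    have "card U \<le> card (A - Nu)" using UNu finA by (intro card_mono) auto
    also have "\<dots> = card A - card Nu" by (rule card_Diff_subset[OF finNu NuA])
    also have "card A = card V - c" unfolding A_def using R2V finR2 cardR2 by (simp add: card_Diff_subset)
    finally have cU: "card U \<le> card V - c - card Nu" .
    have cV: "c \<le> card V" using R2V fin cardR2 card_mono by blast
    have "\<delta> \<le> card Nu" using dle[OF uV] unfolding Nu_def degree_def .
    moreover have "card Nu \<le> card A" by (rule card_mono[OF finA NuA])
    moreover have "card A = card V - c" unfolding A_def using R2V finR2 cardR2 by (simp add: card_Diff_subset)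
    ultimately have cU': "real (card U) \<le> real (card V) - real c - real \<delta>" using cU cV by linarith
    have cA: "real (card A) = real (card V) - real c"
      unfolding A_def using R2V finR2 cardR2 cV by (simp add: card_Diff_subset of_nat_diff)
    have q: "(1-p)^(\<delta>+1) \<le> 1 / (real \<delta> + 1)" unfolding p_def by (rule pow_bound[OF d1])
    have q0: "0 \<le> (1-p)^(\<delta>+1)" using p1 by simp
    have "real t \<le> c + (card X + card Y)" using tD cD by linarith
    also have "\<dots> \<le> c + (p * card A + card U * (1-p)^(\<delta>+1))" using Xb unfolding Y_def by simp
    finally have t1: "real t \<le> c + (p * card A + card U * (1-p)^(\<delta>+1))" .
    have "card U * (1-p)^(\<delta>+1) \<le> card U * (1 / (real \<delta> + 1))" using q by (intro mult_left_mono) auto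
    also have "\<dots> \<le> (real (card V) - real c - real \<delta>) / (real \<delta> + 1)"
      using cU' by (simp add: divide_right_mono)
    finally have t2: "card U * (1-p)^(\<delta>+1) \<le> (real (card V) - real c - real \<delta>) / (real \<delta> + 1)" .
    have "real t \<le> c + ln (real \<delta> + 1) / (real \<delta> + 1) * (real (card V) - real c)
       + (real (card V) - real c - real \<delta>) / (real \<delta> + 1)" using t1 t2 unfolding p_def cA by linarith
    also have "\<dots> < (1 + ln (real \<delta> + 1)) / (real \<delta> + 1) * (real (card V) - real c + 1) + real c - 1"
      using real_bound[of "real \<delta>" "ln (real \<delta> + 1)" c "real (card V) - real c"] d1 by simp
    finally show ?thesis unfolding t_def \<delta>_def by simp
  qed
qed

end
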